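(* Let $a,r$ be positive integers with $r\ge 2$, let $a_n=ar^{n-1}+1$ for $n\ge 1$, and set $d=\gcd(a+1,r-1)$. (1) Suppose $d$ is odd. If $a+1$ does not divide $r-1$, then the sequence $(\Gamma(a_n,a_{n+1}))_{n\ge 1}$ is constant. If $a+1$ divides $r-1$, then $\Gamma(a_1,a_2)=1$ and $\Gamma(a_n,a_{n+1})=2$ for all $n\ge 2$. (2) If $d$ is even, then the sequence $(\Gamma(a_n,a_{n+1}))_{n\ge 2}$ alternates between $1$ and $2$.
   Context: For relatively prime positive integers $p,q$, exactly one of the equations $px+qy=\frac{(p-1)(q-1)}{2}$ (Equation 1) and $px+qy+1=\frac{(p-1)(q-1)}{2}$ (Equation 2) has a solution in nonnegative integers $(x,y)$. For positive integers $a,b$ with $d=\gcd(a,b)$, $\Gamma(a,b)=1$ if Equation 1 with $(p,q)=(a/d,b/d)$ has a nonnegative integer solution, and $\Gamma(a,b)=2$ otherwise. *)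

theory Defs
  imports Main
begin

text \<open>Equation 1 for coprime p q: p x + q y = (p-1)(q-1)/2 has a solution in
nonnegative integers. Note (p-1)(q-1) is even for coprime p, q (not both even),
except the degenerate cases are handled by the exact-halving check below.\<close>

definition eq1_solvable :: "nat \<Rightarrow> nat \<Rightarrow> bool" where
  "eq1_solvable p q \<longleftrightarrow>
     (\<exists>x y :: nat. 2 * (p * x + q * y) = (p - 1) * (q - 1))"

definition Gamma :: "nat \<Rightarrow> nat \<Rightarrow> nat" where
  "Gamma a b = (let d = gcd a b in if eq1_solvable (a div d) (b div d) then 1 else 2)"

definition seq_a :: "nat \<Rightarrow> nat \<Rightarrow> nat \<Rightarrow> nat" where
  "seq_a a r n = a * r ^ (n - 1) + 1"

end

theory Submission imports Defs "HOL-Number_Theory.Number_Theory" begin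

lemma dir2:
  fixes p q m e k j r S a x y :: int
  assumes p2: "p \<ge> 2" and m1: "m \<ge> 1" and qr: "q + m = r*p" and pe: "p = e + a*m*S"
    and ke: "k*e = 1 + m*j" and k1: "1 \<le> k" and km: "k \<le> m" and cop: "coprime e m"
    and x0: "x \<ge> 0" and y0: "y \<ge> 0" and xy: "2*(p*x+q*y) = (p-1)*(q-1)" and q1: "q \<ge> 1"
  shows "2*y+1 = j + k*a*S \<and> 2*x + r*(2*y+1) + 1 = q + k"
proof -
  define K where "K = 2*(x + r*y) - q + 1 + r"
  have "K*p = 2*(p*x+q*y) - 2*q*y + 2*y*(r*p) - q*p + p + r*p" by (simp add: K_def algebra_simps)
  also have "\<dots> = (p-1)*(q-1) - 2*q*y + 2*y*(q+m) - q*p + p + (q+m)" using xy qr by simp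
  also have "\<dots> = m*(2*y+1)+1" by (simp add: algebra_simps)
  finally have hK: "K*p = m*(2*y+1)+1" .
  have Kpos: "K \<ge> 1"
  proof (rule ccontr)
    assume "\<not> K \<ge> 1"
    hence "K \<le> 0" by simp
    hence "K*p \<le> 0" using p2 by (simp add: mult_nonpos_nonneg)
    moreover have "m*(2*y+1) \<ge> 0" using m1 y0 by simp
    ultimately show False using hK by linarith
  qed
  have Kle: "K \<le> m"
  proof (rule ccontr)
    assume "\<not> K \<le> m"
    hence Km: "K \<ge> m+1" by simp
    have "2*q*y \<le> (p-1)*(q-1)" proof -
      have "p*x \<ge> 0" using x0 p2 by simp
      thus ?thesis using xy by (simp add: algebra_simps)
    qed
    hence A: "m*(2*q*y) \<le> m*((p-1)*(q-1))" using m1 by (simp add: mult_left_mono)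
    have "(K*p)*q = m*(2*q*y) + m*q + q" using hK by (simp add: algebra_simps)
    also have "\<dots> \<le> m*((p-1)*(q-1)) + m*q + q" using A by simp
    finally have B: "(K*p)*q \<le> m*((p-1)*(q-1)) + m*q + q" .
    have "(m+1)*(p*q) \<le> K*(p*q)" using Km p2 q1 by (simp add: mult_right_mono)
    hence "(m+1)*(p*q) \<le> m*((p-1)*(q-1)) + m*q + q" using B by (simp add: algebra_simps)
    hence C: "(p-1)*(q+m) \<le> 0" by (simp add: algebra_simps)
    have "(p-1)*(q+m) > 0" using p2 q1 m1 by simp
    thus False using C by simp
  qed
  have "K*e = m*(2*y+1) + 1 - K*a*m*S" using hK pe by (simp add: algebra_simps)
  hence "(K-k)*e = m*(2*y+1 - K*a*S - j)" using ke by (simp add: algebra_simps)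
  hence "m dvd (K-k)*e" by simp
  hence "m dvd (K-k)" using cop by (metis coprime_commute coprime_dvd_mult_left_iff)
  then obtain t where t: "K - k = m*t" by blast
  have "t = 0"
  proof (rule ccontr)
    assume "t \<noteq> 0"
    hence "t \<ge> 1 \<or> t \<le> -1" by linarith
    hence "m*t \<ge> m*1 \<or> m*t \<le> m*(-1)" using m1
      by (meson mult_left_mono less_le_trans zero_less_one less_imp_le)
    thus False using t Kpos Kle k1 km by linarith
  qed
  hence Kk: "K = k" using t by simp
  have "m*(2*y+1) = m*(j + k*a*S)" using hK Kk pe ke by (simp add: algebra_simps)
  hence "2*y+1 = j + k*a*S" using m1 by simp
  moreover have "2*x + r*(2*y+1) + 1 = q + k" using Kk K_def by (simp add: algebra_simps)
  ultimately show ?thesis by simp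
qed

lemma char:
  fixes p q m e k j r S a :: nat
  assumes p2: "p \<ge> 2" and m1: "m \<ge> 1" and qr: "q + m = r*p" and pe: "p = e + a*m*S"
    and ke: "k*e = 1 + m*j" and k1: "1 \<le> k" and km: "k \<le> m" and cop: "coprime e m"
    and rm: "r \<ge> m + 1"
  shows "eq1_solvable p q \<longleftrightarrow> odd (j + k*a*S) \<and> even (q + k + 1 + r*(j + k*a*S))"
proof -
  have je: "j < e"
  proof -
    have "k*e \<le> m*e" using km by simp
    hence "m*j < m*e" using ke by linarith
    thus ?thesis by simp
  qed
  have qri: "int q + int m = int r * int p" using qr by (metis of_nat_add of_nat_mult)
  have pei: "int p = int e + int a * int m * int S" using pe by simp
  have kei: "int k * int e = 1 + int m * int j" using ke by (metis of_nat_1 of_nat_add of_nat_mult)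
  have key: "int p * int k - int m * (int j + int k * int a * int S) = 1"
    using pei kei by (simp add: algebra_simps)
  have "r*p \<ge> (m+1)*2" using rm p2 mult_le_mono by blast
  hence "2*m+2 \<le> r*p" by simp
  hence q1: "q \<ge> 1" using qr by linarith
  show ?thesis
  proof
    assume h: "odd (j + k*a*S) \<and> even (q + k + 1 + r*(j + k*a*S))"
    define V where "V = j + k*a*S"
    obtain y where y: "V = 2*y+1" using h V_def oddE by blast
    obtain w where w: "q + k + 1 + r*V = 2*w" using h V_def by blast
    have qi: "int q = int r * int e + int r * int a * int m * int S - int m"
      using qri pei by (simp add: algebra_simps)
    have t1: "int r * (int e - int j) \<ge> int r" using mult_left_mono[of 1 "int e - int j" "int r"] je by simp
    have t2: "int r * int a * int S * (int m - int k) \<ge> 0" using km by simp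
    have big: "int q + int k \<ge> int r * int V + 1"
      using qi t1 t2 k1 rm unfolding V_def by (simp add: algebra_simps)
    have b2: "r*V + 1 \<le> q + k"
    proof -
      have "int (r*V+1) \<le> int (q+k)" using big by simp
      thus ?thesis by linarith
    qed
    have b3: "r*V + 1 \<le> w" using b2 w by linarith
    define x where "x = w - r*V - 1"
    have xi: "2 * int x = int q + int k - 1 - int r * int V"
    proof -
      have "int q + int k + 1 + int r * int V = 2 * int w" using w by (metis of_nat_1 of_nat_add of_nat_mult of_nat_numeral)
      moreover have "int x = int w - int r * int V - 1" unfolding x_def using b3 by (simp add: of_nat_diff) 
      ultimately show ?thesis by (simp add: algebra_simps)
    qed
    have yi: "int V = 2 * int y + 1" using y by simp
    have Vi: "int V = int j + int k * int a * int S" unfolding V_def by simp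
    have "2 * (int p * int x + int q * int y) = (int p - 1) * (int q - 1)"
    proof -
      have "2 * (int p * int x + int q * int y) = int p * (2 * int x) + int q * (2 * int y)" by (simp add: algebra_simps)
      also have "\<dots> = int p * (int q + int k - 1 - int r * int V) + int q * (int V - 1)" using xi yi by simp
      also have "\<dots> = int p * int q - int p - int q + (int p * int k - int V * (int r * int p - int q))" by (simp add: algebra_simps)
      also have "\<dots> = int p * int q - int p - int q + (int p * int k - int V * int m)"
      proof -
        have rpq: "int m = int r * int p - int q" using qri by simp
        show ?thesis unfolding rpq by (simp add: algebra_simps)
      qed
      also have "\<dots> = int p * int q - int p - int q + 1" using key Vi by (simp add: algebra_simps)
      finally show ?thesis by (simp add: algebra_simps)
    qed
    hence "int (2 * (p * x + q * y)) = int ((p - 1) * (q - 1))" using p2 q1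
      by (simp add: of_nat_diff)
    hence "2 * (p * x + q * y) = (p - 1) * (q - 1)" by (metis of_nat_eq_iff)
    thus "eq1_solvable p q" unfolding eq1_solvable_def by blast
  next
    assume "eq1_solvable p q"
    then obtain x y where xy: "2 * (p * x + q * y) = (p - 1) * (q - 1)" unfolding eq1_solvable_def by blast
    have xyi: "2*(int p*int x+int q*int y) = (int p-1)*(int q-1)"
    proof -
      have "int (2 * (p * x + q * y)) = int ((p - 1) * (q - 1))" using xy by simp
      thus ?thesis using p2 q1 by (simp add: of_nat_diff)
    qed
    have D: "2*int y+1 = int j + int k*int a*int S \<and> 2*int x + int r*(2*int y+1) + 1 = int q + int k"
      apply (rule dir2[of p m q r e a S k j x y])
      using p2 m1 qri pei kei k1 km cop xyi q1 by auto
    have D1: "2*y+1 = j + k*a*S"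
    proof -
      have "int (2*y+1) = int (j + k*a*S)" using D by simp
      thus ?thesis by (metis of_nat_eq_iff)
    qed
    have D2: "2*x + r*(2*y+1) + 1 = q + k"
    proof -
      have "int (2*x + r*(2*y+1) + 1) = int (q + k)" using conjunct2[OF D] by (simp only: of_nat_add of_nat_mult of_nat_1 of_nat_numeral)
      thus ?thesis by (metis of_nat_eq_iff)
    qed
    have "q + k + 1 + r*(j + k*a*S) = 2*(x + r*(2*y+1) + 1)" using D1 D2 by simp
    thus "odd (j + k*a*S) \<and> even (q + k + 1 + r*(j + k*a*S))" using D1 by (metis dvd_triv_left even_add odd_one even_mult_iff)
  qed
qed


fun Sg :: "nat \<Rightarrow> nat \<Rightarrow> nat" where
  "Sg r 0 = 0"
| "Sg r (Suc i) = r * Sg r i + 1"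

lemma Sg_pow: "r \<ge> 1 \<Longrightarrow> r ^ i = 1 + (r - 1) * Sg r i"
proof (induction i)
  case 0 then show ?case by simp
next
  case (Suc i)
  have "r ^ Suc i = r * (1 + (r - 1) * Sg r i)" using Suc by simp
  also have "\<dots> = 1 + (r - 1) * Sg r (Suc i)"
  proof -
    obtain t where t: "r = Suc t" using Suc.prems by (cases r) auto
    show ?thesis unfolding t by (simp add: algebra_simps)
  qed
  finally show ?case .
qed

lemma Sg_odd_r: "odd r \<Longrightarrow> even (Sg r i) \<longleftrightarrow> even i"
  by (induction i) auto

lemma Sg_even_r: "even r \<Longrightarrow> i \<ge> 1 \<Longrightarrow> odd (Sg r i)"
  by (cases i) auto

lemma setup_gamma:
  fixes a r d e m k j i :: nat
  assumes a0: "a > 0" and r2: "r \<ge> 2" and ae: "a + 1 = d * e" and rdm: "r = 1 + d * m"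
    and m1: "m \<ge> 1" and cop: "coprime e m"
    and ke: "k*e = 1 + m*j" and k1: "1 \<le> k" and km: "k \<le> m"
  shows "seq_a a r (Suc i) = d * (e + a*m*Sg r i)"
    and "Gamma (seq_a a r (Suc i)) (seq_a a r (Suc (Suc i))) =
           (if eq1_solvable (e + a*m*Sg r i) (e + a*m*Sg r (Suc i)) then 1 else 2)"
    and "e + a*m*Sg r i \<ge> 2 \<Longrightarrow> eq1_solvable (e + a*m*Sg r i) (e + a*m*Sg r (Suc i)) \<longleftrightarrow>
           odd (j + k*a*Sg r i) \<and> even ((e + a*m*Sg r (Suc i)) + k + 1 + r*(j + k*a*Sg r i))"
proof -
  have d0: "d > 0" using ae by (metis add_is_0 mult_is_0 neq0_conv one_neq_zero)
  have seqS: "seq_a a r (Suc n) = d * (e + a*m*Sg r n)" for n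
  proof -
    have "seq_a a r (Suc n) = a * r ^ n + 1" by (simp add: seq_a_def)
    also have "\<dots> = a * (1 + (r - 1) * Sg r n) + 1" using r2 Sg_pow[of r n] by simp
    also have "\<dots> = (a + 1) + a * (d * m) * Sg r n" using rdm by (simp add: algebra_simps)
    also have "\<dots> = d * (e + a*m*Sg r n)" using ae by (simp add: algebra_simps)
    finally show ?thesis .
  qed
  show "seq_a a r (Suc i) = d * (e + a*m*Sg r i)" by (rule seqS)
  define P where "P = e + a*m*Sg r i"
  define Q where "Q = e + a*m*Sg r (Suc i)"
  have QP: "Q + m = r * P"
  proof -
    have "Q + m = e + a*m*(r*Sg r i) + a*m + m" unfolding Q_def by (simp add: algebra_simps)
    also have "\<dots> = e + m*(a+1) + r*(a*m*Sg r i)" by (simp add: algebra_simps)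
    also have "\<dots> = e + m*(d*e) + r*(a*m*Sg r i)" using ae by simp
    also have "\<dots> = r * P" unfolding P_def using rdm by (simp add: algebra_simps)
    finally show ?thesis .
  qed
  have copPQ: "coprime P Q"
  proof (rule coprimeI)
    fix g assume gP: "g dvd P" and gQ: "g dvd Q"
    have "g dvd r * P" using gP by simp
    hence "g dvd Q + m" using QP by simp
    hence gm: "g dvd m" using gQ by (simp add: dvd_add_right_iff)
    hence "g dvd a*m*Sg r i" by simp
    hence "g dvd e" using gP unfolding P_def by (simp add: dvd_add_left_iff)
    thus "is_unit g" using gm cop by (meson coprime_common_divisor)
  qed
  have "gcd (d*P) (d*Q) = d" using copPQ by (simp add: gcd_mult_left)
  hence "Gamma (d*P) (d*Q) = (if eq1_solvable P Q then 1 else 2)"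
    unfolding Gamma_def using d0 by (simp add: Let_def)
  thus "Gamma (seq_a a r (Suc i)) (seq_a a r (Suc (Suc i))) =
           (if eq1_solvable (e + a*m*Sg r i) (e + a*m*Sg r (Suc i)) then 1 else 2)"
    using seqS[of i] seqS[of "Suc i"] unfolding P_def Q_def by simp
  assume "e + a*m*Sg r i \<ge> 2"
  hence p2: "P \<ge> 2" unfolding P_def .
  have rm: "r \<ge> m + 1" proof -
    have "m \<le> d*m" using d0 by simp
    thus ?thesis using rdm by linarith
  qed
  show "eq1_solvable (e + a*m*Sg r i) (e + a*m*Sg r (Suc i)) \<longleftrightarrow>
           odd (j + k*a*Sg r i) \<and> even ((e + a*m*Sg r (Suc i)) + k + 1 + r*(j + k*a*Sg r i))"
    using char[OF p2 m1 QP P_def ke k1 km cop rm] unfolding P_def Q_def .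
qed


theorem theorem1p7:
  fixes a r :: nat
  assumes "a > 0" and "r \<ge> 2"
  defines "d \<equiv> gcd (a + 1) (r - 1)"
  shows "(odd d \<longrightarrow>
            (\<not> (a + 1) dvd (r - 1) \<longrightarrow>
               (\<exists>c. \<forall>n\<ge>1. Gamma (seq_a a r n) (seq_a a r (n + 1)) = c)) \<and>
            ((a + 1) dvd (r - 1) \<longrightarrow>
               Gamma (seq_a a r 1) (seq_a a r 2) = 1 \<and>
               (\<forall>n\<ge>2. Gamma (seq_a a r n) (seq_a a r (n + 1)) = 2)))
       \<and> (even d \<longrightarrow>
            (\<forall>n\<ge>2. {Gamma (seq_a a r n) (seq_a a r (n + 1)),
                      Gamma (seq_a a r (n + 1)) (seq_a a r (n + 2))} = {1, 2}))"
proof -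
  note a0 = assms(1) and r2 = assms(2)
  define e where "e = (a+1) div d"
  define m where "m = (r-1) div d"
  have d0: "d > 0" unfolding d_def by simp
  have ae: "a + 1 = d * e" unfolding e_def d_def by simp
  have rdm0: "r - 1 = d * m" unfolding m_def d_def by simp
  hence rdm: "r = 1 + d * m" using r2 by linarith
  have m1: "m \<ge> 1" using rdm r2 by (cases m) auto
  have e1: "e \<ge> 1" using ae by (cases e) auto
  have cop: "coprime e m" unfolding e_def m_def d_def by (rule div_gcd_coprime) simp
  obtain k j where ke: "k*e = 1 + m*j" and k1: "1 \<le> k" and km: "k \<le> m"
  proof (cases "m = 1")
    case True
    show ?thesis using that[of 1 "e - 1"] True e1 by simp
  next
    case False
    hence m2: "m \<ge> 2" using m1 by simp
    obtain x where x: "[e*x = Suc 0] (mod m)" using cong_solve_coprime_nat[OF cop] by blast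
    define k where "k = x mod m"
    have "(k*e) mod m = (e*x) mod m" unfolding k_def by (simp add: mod_mult_right_eq mult.commute)
    also have "\<dots> = 1" using x m2 unfolding cong_def by simp
    finally have kem: "(k*e) mod m = 1" .
    have "k \<noteq> 0" proof assume "k = 0" thus False using kem by simp qed
    moreover have "k < m" unfolding k_def using m2 by simp
    moreover have "k*e = 1 + m*(k*e div m)"
    proof -
      have dm: "(k*e) div m * m + 1 = k*e" using div_mult_mod_eq[of "k*e" m] kem by simp
      have "m*(k*e div m) = (k*e) div m * m" by (rule mult.commute)
      thus ?thesis using dm by linarith
    qed
    ultimately show ?thesis using that[of k "k*e div m"] by simp
  qed
  note SG = setup_gamma[OF a0 r2 ae rdm m1 cop ke k1 km]
  define G where "G i = Gamma (seq_a a r (Suc i)) (seq_a a r (Suc (Suc i)))" for i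
  define C where "C i = (odd (j + k*a*Sg r i) \<and> even ((e + a*m*Sg r (Suc i)) + k + 1 + r*(j + k*a*Sg r i)))" for i
  have GC: "G i = (if C i then 1 else 2)" if "e + a*m*Sg r i \<ge> 2" for i
    unfolding G_def C_def using SG(2)[of i] SG(3)[OF that] by simp
  have P2: "e + a*m*Sg r i \<ge> 2" if "i \<ge> 1 \<or> e \<ge> 2" for i
  proof (cases "e \<ge> 2")
    case True thus ?thesis by simp
  next
    case False
    hence i1: "i \<ge> 1" using that by simp
    have "Sg r i \<ge> 1" using i1 by (cases i) auto
    hence "a*m*Sg r i \<ge> 1" using a0 m1 by simp
    thus ?thesis using e1 by linarith
  qed
  have pk: "even (k*e) \<longleftrightarrow> even (1 + m*j)" using ke by simp
  have pa: "even (a+1) \<longleftrightarrow> even (d*e)" using ae by simp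
  have pr: "even r \<longleftrightarrow> even (1 + d*m)" using rdm by simp
  have pc: "\<not> (even e \<and> even m)"
  proof
    assume "even e \<and> even m"
    hence "2 dvd gcd e m" by simp
    thus False using cop by simp
  qed
  have dvdiff: "(a + 1) dvd (r - 1) \<longleftrightarrow> e = 1"
  proof
    assume "(a + 1) dvd (r - 1)"
    hence "d = a + 1" unfolding d_def by simp
    hence de: "d * e = d" using ae by metis
    show "e = 1" using de d0 by simp
  next
    assume "e = 1"
    thus "(a + 1) dvd (r - 1)" using ae rdm0 by simp
  qed
  have partA: "C i = C 0" if od: "odd d" for i
  proof (cases "even r")
    case True
    hence "odd m" using pr od by simp
    thus ?thesis unfolding C_def using True od pk pa by (cases "even (Sg r i)") auto
  next
    case False
    hence em: "even m" using pr od by simp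
    hence "odd e" using pc by simp
    hence "even a" using pa od by simp
    thus ?thesis unfolding C_def using False od pk em by (cases "even (Sg r i)") auto
  qed
  have partB: "\<not> C i" if od: "odd d" and e_1: "e = 1" and i1: "i \<ge> 1" for i
  proof -
    have "even a" using pa od e_1 by simp
    have kk: "k = 1 \<and> j = 0"
    proof (cases "j = 0")
      case True thus ?thesis using ke e_1 by simp
    next
      case False
      hence mj: "m*j \<ge> m" by simp
      have "k = 1 + m*j" using ke e_1 by simp
      hence False using mj km by linarith
      thus ?thesis ..
    qed
    show ?thesis
    proof (cases "even r")
      case True
      hence "odd m" using pr od by simp
      thus ?thesis unfolding C_def using True od kk e_1 \<open>even a\<close> by (cases "even (Sg r i)") auto
    next
      case False
      hence em: "even m" using pr od by simp
      thus ?thesis unfolding C_def using False od kk e_1 \<open>even a\<close> by (cases "even (Sg r i)") auto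
    qed
  qed
  have partC: "C i \<longleftrightarrow> \<not> C (Suc i)" if ev: "even d" and i1: "i \<ge> 1" for i
  proof -
    have "odd r" using pr ev by simp
    have "odd a" using pa ev by simp
    have s1: "even (Sg r (Suc i)) \<longleftrightarrow> even (Suc i)" using Sg_odd_r[OF \<open>odd r\<close>] .
    have s2: "even (Sg r (Suc (Suc i))) \<longleftrightarrow> even i" using Sg_odd_r[OF \<open>odd r\<close>, of "Suc (Suc i)"] by simp
    have s0: "even (Sg r i) \<longleftrightarrow> even i" using Sg_odd_r[OF \<open>odd r\<close>] .
    show ?thesis unfolding C_def using s0 s1 s2 \<open>odd r\<close> \<open>odd a\<close> pk pc
      by (cases "even i"; cases "even m"; cases "even e") auto
  qed
  have seqn: "Gamma (seq_a a r n) (seq_a a r (n + 1)) = G (n - 1)" if "n \<ge> 1" for n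
    unfolding G_def using that by (cases n) auto
  have seqn2: "Gamma (seq_a a r (n + 1)) (seq_a a r (n + 2)) = G n" for n
    unfolding G_def by simp
  show ?thesis
  proof (intro conjI impI)
    assume od: "odd d" and nd: "\<not> (a + 1) dvd (r - 1)"
    hence e2: "e \<ge> 2" using dvdiff e1 by simp
    have "\<forall>n\<ge>1. Gamma (seq_a a r n) (seq_a a r (n + 1)) = G 0"
    proof (intro allI impI)
      fix n :: nat assume n1: "n \<ge> 1"
      have cc: "C (n-1) = C 0" by (rule partA[OF od])
      have "G (n-1) = G 0" using GC[OF P2[of "n-1"]] GC[OF P2[of 0]] e2 cc by simp
      thus "Gamma (seq_a a r n) (seq_a a r (n + 1)) = G 0" using seqn[OF n1] by simp
    qed
    thus "\<exists>c. \<forall>n\<ge>1. Gamma (seq_a a r n) (seq_a a r (n + 1)) = c" by blast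
  next
    assume od: "odd d" and dv: "(a + 1) dvd (r - 1)"
    hence e_1: "e = 1" using dvdiff by simp
    have "eq1_solvable 1 (e + a*m*Sg r 1)" unfolding eq1_solvable_def by auto
    hence "G 0 = 1" using SG(2)[of 0] e_1 unfolding G_def by simp
    thus "Gamma (seq_a a r 1) (seq_a a r 2) = 1" unfolding G_def by (simp add: numeral_2_eq_2)
  next
    assume od: "odd d" and dv: "(a + 1) dvd (r - 1)"
    hence e_1: "e = 1" using dvdiff by simp
    show "\<forall>n\<ge>2. Gamma (seq_a a r n) (seq_a a r (n + 1)) = 2"
    proof (intro allI impI)
      fix n :: nat assume n2: "n \<ge> 2"
      have i1: "n - 1 \<ge> 1" using n2 by simp
      have pp: "e + a*m*Sg r (n-1) \<ge> 2" using P2[of "n-1"] i1 by simp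
      have "\<not> C (n-1)" using partB[OF od e_1 i1] .
      hence "G (n-1) = 2" using GC[OF pp] by simp
      thus "Gamma (seq_a a r n) (seq_a a r (n + 1)) = 2" using seqn n2 by simp
    qed
  next
    assume ev: "even d"
    show "\<forall>n\<ge>2. {Gamma (seq_a a r n) (seq_a a r (n + 1)),
                      Gamma (seq_a a r (n + 1)) (seq_a a r (n + 2))} = {1, 2}"
    proof (intro allI impI)
      fix n :: nat assume n2: "n \<ge> 2"
      have i1: "n - 1 \<ge> 1" using n2 by simp
      have pp1: "e + a*m*Sg r (n-1) \<ge> 2" using P2[of "n-1"] i1 by simp
      have pp2: "e + a*m*Sg r n \<ge> 2" using P2[of "n"] n2 by simp
      have g1: "G (n-1) = (if C (n-1) then 1 else 2)" using GC[OF pp1] .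
      have g2: "G n = (if C n then 1 else 2)" using GC[OF pp2] .
      have "C (n-1) \<longleftrightarrow> \<not> C (Suc (n-1))" using partC[OF ev i1] .
      hence "C (n-1) \<longleftrightarrow> \<not> C n" using n2 by simp
      hence "{G (n-1), G n} = {1,2}" using g1 g2 by auto
      thus "{Gamma (seq_a a r n) (seq_a a r (n + 1)),
                      Gamma (seq_a a r (n + 1)) (seq_a a r (n + 2))} = {1, 2}"
        using seqn[of n] seqn2[of n] n2 by simp
    qed
  qed
qed

end
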